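(* Let $G$ be a finite simple graph on $n\ge3$ vertices and let $A\ne0$ be a real symmetric weighted adjacency matrix of $G$. Then $$\sup_{\boldsymbol v\in\mathcal S_n}\{|\boldsymbol v|^2:\langle\boldsymbol v,A\boldsymbol v\rangle=0\}=\min\{W_A(x):\lambda_{\min}(A)^{-1}\le x\le\lambda_{\max}(A)^{-1}\}.$$
   Context: A weighted adjacency matrix is a real symmetric $A$ with $A_{ii}=0$ and $A_{ij}=0$ for non-adjacent $i\ne j$; for $A\neq 0$, $\lambda_{\min}(A)<0<\lambda_{\max}(A)$. $\mathcal S_n=\{\boldsymbol v\in\mathbb R^n:\langle\boldsymbol 1,\boldsymbol v\rangle=|\boldsymbol v|^2\}$ with $\boldsymbol 1$ the all-ones vector. $W_A(x)=\sum_{\lambda\in\sigma(A)}\frac{\langle\boldsymbol 1,P_\lambda\boldsymbol 1\rangle}{1-\lambda x}$ with $P_\lambda$ the orthogonal eigenprojections of $A$, terms with $\langle\boldsymbol 1,P_\lambda\boldsymbol 1\rangle=0$ omitted, and value $+\infty$ at a pole. *)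

theory Defs
  imports "HOL-Analysis.Analysis"
begin

definition ones :: "real^'n" where "ones = vec 1"

definition eigvals :: "real^'n^'n \<Rightarrow> real set" where
  "eigvals A = {l. \<exists>v. v \<noteq> 0 \<and> A *v v = scaleR l v}"

definition eigproj :: "real^'n^'n \<Rightarrow> real \<Rightarrow> real^'n \<Rightarrow> real^'n" where
  "eigproj A l x = closest_point {v. A *v v = scaleR l v} x"

definition weighted_adj :: "('n \<Rightarrow> 'n \<Rightarrow> bool) \<Rightarrow> real^'n^'n \<Rightarrow> bool" where
  "weighted_adj E A \<longleftrightarrow> transpose A = A \<and> (\<forall>i. A $ i $ i = 0) \<and>
     (\<forall>i j. i \<noteq> j \<and> \<not> E i j \<longrightarrow> A $ i $ j = 0)"

definition S_set :: "(real^'n) set" where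
  "S_set = {v. ones \<bullet> v = (norm v)\<^sup>2}"

definition W_A :: "real^'n^'n \<Rightarrow> real \<Rightarrow> ereal" where
  "W_A A x = (let w = (\<lambda>l. ones \<bullet> eigproj A l ones);
                  L = {l \<in> eigvals A. w l \<noteq> 0}
              in if \<exists>l\<in>L. 1 - l * x = 0 then PInfty
                 else ereal (\<Sum>l\<in>L. w l / (1 - l * x)))"

end

theory Submission
  imports Defs
begin

lemma sym_inner:
  fixes A :: "real^'n^'n"
  assumes "transpose A = A"
  shows "(A *v x) \<bullet> y = x \<bullet> (A *v y)"
proof -
  have "(A *v x) \<bullet> y = (x v* transpose A) \<bullet> y" by simp
  also have "\<dots> = x \<bullet> (transpose A *v y)" by (rule dot_lmul_matrix)
  finally show ?thesis using assms by simp
qed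

lemma eig_subspace: "subspace {v. (A::real^'n^'n) *v v = l *\<^sub>R v}"
  by (auto simp: subspace_def algebra_simps)

lemma eig_closed: "closed {v. (A::real^'n^'n) *v v = l *\<^sub>R v}"
  by (rule closed_subspace[OF eig_subspace])

lemma eig_orth:
  fixes A :: "real^'n^'n"
  assumes "transpose A = A" "A *v v = l *\<^sub>R v" "A *v w = m *\<^sub>R w" "l \<noteq> m"
  shows "v \<bullet> w = 0"
proof -
  have "l * (v \<bullet> w) = m * (v \<bullet> w)"
    using sym_inner[OF assms(1), of v w] assms(2,3) by simp
  thus ?thesis using assms(4) by simp
qed

lemma eigproj_props:
  fixes A :: "real^'n^'n"
  shows "A *v eigproj A l x = l *\<^sub>R eigproj A l x"
    and "\<And>y. A *v y = l *\<^sub>R y \<Longrightarrow> (x - eigproj A l x) \<bullet> y = 0"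
proof -
  let ?S = "{v. A *v v = l *\<^sub>R v}"
  have cv: "convex ?S" using subspace_imp_convex[OF eig_subspace] .
  have "0 \<in> ?S" by simp
  hence ne: "?S \<noteq> {}" by blast
  have p: "eigproj A l x \<in> ?S" unfolding eigproj_def
    by (rule closest_point_in_set[OF eig_closed ne])
  thus "A *v eigproj A l x = l *\<^sub>R eigproj A l x" by simp
  fix y assume y: "A *v y = l *\<^sub>R y"
  let ?p = "eigproj A l x"
  have "?p + y \<in> ?S" "?p - y \<in> ?S" using p y by (auto simp: algebra_simps)
  hence "(x - ?p) \<bullet> ((?p + y) - ?p) \<le> 0" "(x - ?p) \<bullet> ((?p - y) - ?p) \<le> 0"
    unfolding eigproj_def using closest_point_dot[OF cv eig_closed] by blast+
  thus "(x - eigproj A l x) \<bullet> y = 0" by (simp add: inner_diff_right)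
qed

lemma quad_zero:
  fixes b c :: real
  assumes "\<forall>t. b * t + c * t^2 \<le> 0"
  shows "b = 0"
proof (rule ccontr)
  assume b: "b \<noteq> 0"
  define e where "e = 1 / (2 * (\<bar>c\<bar> + 1))"
  have e: "e > 0" "\<bar>c\<bar> * e \<le> 1/2" unfolding e_def by (auto simp: field_simps)
  have bb: "b^2 > 0" using b by simp
  have "c * (b*e)^2 \<ge> - \<bar>c\<bar> * (b*e)^2" by (intro mult_right_mono) auto
  also have "- \<bar>c\<bar> * (b*e)^2 = - (\<bar>c\<bar> * e) * (b^2 * e)" by (simp add: power2_eq_square algebra_simps)
  finally have "c * (b*e)^2 \<ge> - (\<bar>c\<bar> * e) * (b^2 * e)" .
  hence "b * (b*e) + c * (b*e)^2 \<ge> b^2 * e - (\<bar>c\<bar> * e) * (b^2 * e)"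
    by (simp add: power2_eq_square)
  moreover have "(\<bar>c\<bar> * e) * (b^2 * e) \<le> (1/2) * (b^2 * e)"
    using e bb by (intro mult_right_mono) auto
  moreover have "b^2 * e > 0" using e bb by simp
  ultimately have "b * (b*e) + c * (b*e)^2 > 0" by linarith
  thus False using assms by (meson not_le)
qed

lemma rayleigh_max:
  fixes A :: "real^'n^'n"
  assumes sym: "transpose A = A" and U: "subspace U" and inv: "\<forall>y\<in>U. A *v y \<in> U"
    and ne: "U \<noteq> {0}"
  shows "\<exists>x\<in>U. norm x = 1 \<and> A *v x = (x \<bullet> (A *v x)) *\<^sub>R x \<and>
           (\<forall>y\<in>U. y \<bullet> (A *v y) \<le> (x \<bullet> (A *v x)) * (y \<bullet> y))"
proof -
  define K where "K = U \<inter> sphere 0 1"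
  have cK: "compact K" unfolding K_def
    by (intro closed_Int_compact closed_subspace U compact_sphere)
  obtain y0 where y0: "y0 \<in> U" "y0 \<noteq> 0" using ne subspace_0[OF U] by blast
  have "y0 /\<^sub>R norm y0 \<in> K" unfolding K_def using y0 subspace_scale[OF U] by auto
  hence neK: "K \<noteq> {}" by blast
  have cont: "continuous_on K (\<lambda>y. y \<bullet> (A *v y))"
    by (intro continuous_on_inner continuous_on_id matrix_vector_mult_linear_continuous_on)
  obtain x where x: "x \<in> K" and xmax: "\<And>y. y \<in> K \<Longrightarrow> y \<bullet> (A *v y) \<le> x \<bullet> (A *v x)"
    using continuous_attains_sup[OF cK neK cont] by blast
  define \<mu> where "\<mu> = x \<bullet> (A *v x)"
  have xU: "x \<in> U" and xn: "norm x = 1" using x by (auto simp: K_def)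
  have xx: "x \<bullet> x = 1" using xn by (metis norm_eq_1)
  have bound: "y \<bullet> (A *v y) \<le> \<mu> * (y \<bullet> y)" if yU: "y \<in> U" for y
  proof (cases "y = 0")
    case True thus ?thesis by simp
  next
    case False
    define z where "z = y /\<^sub>R norm y"
    have "z \<in> K" unfolding K_def z_def using False yU subspace_scale[OF U] by auto
    hence "z \<bullet> (A *v z) \<le> \<mu>" using xmax \<mu>_def by blast
    hence "norm y ^ 2 * (z \<bullet> (A *v z)) \<le> norm y ^ 2 * \<mu>" by (intro mult_left_mono) auto
    moreover have "y = norm y *\<^sub>R z" unfolding z_def using False by simp
    hence "y \<bullet> (A *v y) = norm y ^ 2 * (z \<bullet> (A *v z))"
      by (metis (no_types, lifting) inner_scaleR_left inner_scaleR_right matrix_vector_mult_scaleR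
          mult.assoc power2_eq_square)
    ultimately show ?thesis by (simp add: power2_norm_eq_inner mult.commute)
  qed
  define w where "w = A *v x - \<mu> *\<^sub>R x"
  have wU: "w \<in> U" unfolding w_def using inv xU U
    by (intro subspace_diff subspace_scale) auto
  have "\<forall>t. (2 * (w \<bullet> w)) * t + (w \<bullet> (A *v w) - \<mu> * (w \<bullet> w)) * t^2 \<le> 0"
  proof
    fix t :: real
    have "(x + t *\<^sub>R w) \<in> U" using xU wU U by (intro subspace_add subspace_scale) auto
    hence b: "(x + t *\<^sub>R w) \<bullet> (A *v (x + t *\<^sub>R w)) \<le> \<mu> * ((x + t *\<^sub>R w) \<bullet> (x + t *\<^sub>R w))"
      by (rule bound)
    have s: "(A *v w) \<bullet> x = w \<bullet> (A *v x)" using sym_inner[OF sym] by simp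
    have e1: "(x + t *\<^sub>R w) \<bullet> (A *v (x + t *\<^sub>R w)) = \<mu> + 2 * t * (w \<bullet> (A *v x)) + t^2 * (w \<bullet> (A *v w))"
      using s by (simp add: algebra_simps inner_add_left inner_add_right \<mu>_def power2_eq_square inner_commute)
    have e2: "(x + t *\<^sub>R w) \<bullet> (x + t *\<^sub>R w) = 1 + 2 * t * (w \<bullet> x) + t^2 * (w \<bullet> w)"
      using xx by (simp add: algebra_simps inner_add_left inner_add_right power2_eq_square inner_commute)
    have ww: "w \<bullet> w = w \<bullet> (A *v x) - \<mu> * (w \<bullet> x)" unfolding w_def
      by (simp add: inner_diff_right)
    show "(2 * (w \<bullet> w)) * t + (w \<bullet> (A *v w) - \<mu> * (w \<bullet> w)) * t^2 \<le> 0"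
      using b unfolding e1 e2 ww by (simp add: algebra_simps)
  qed
  hence "2 * (w \<bullet> w) = 0" by (rule quad_zero)
  hence "w = 0" by simp
  hence "A *v x = \<mu> *\<^sub>R x" unfolding w_def by simp
  thus ?thesis using xU xn bound unfolding \<mu>_def by blast
qed

lemma eigvals_finite:
  fixes A :: "real^'n^'n"
  assumes sym: "transpose A = A"
  shows "finite (eigvals A)"
proof -
  define e where "e l = (SOME v. v \<noteq> 0 \<and> A *v v = l *\<^sub>R v)" for l
  have e: "e l \<noteq> 0 \<and> A *v e l = l *\<^sub>R e l" if lE: "l \<in> eigvals A" for l
    using that unfolding eigvals_def e_def by (metis (mono_tags, lifting) mem_Collect_eq someI_ex)
  have inj: "inj_on e (eigvals A)"
  proof (rule inj_onI)
    fix l m assume lm: "l \<in> eigvals A" "m \<in> eigvals A" "e l = e m"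
    have "l *\<^sub>R e l = A *v e l" using e[OF lm(1)] by simp
    also have "\<dots> = A *v e m" using lm(3) by simp
    also have "\<dots> = m *\<^sub>R e m" using e[OF lm(2)] by simp
    also have "\<dots> = m *\<^sub>R e l" using lm(3) by simp
    finally have "l *\<^sub>R e l = m *\<^sub>R e l" .
    thus "l = m" using e[OF lm(1)] by (simp add: scaleR_cancel_right)
  qed
  have po: "pairwise orthogonal (e ` eigvals A)"
  proof (rule pairwiseI)
    fix u v assume "u \<in> e ` eigvals A" "v \<in> e ` eigvals A" "u \<noteq> v"
    then obtain l m where "l \<in> eigvals A" "m \<in> eigvals A" "u = e l" "v = e m" "l \<noteq> m" by blast
    thus "orthogonal u v" unfolding orthogonal_def
      using e eig_orth[OF sym, of "e l" l "e m" m] by simp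
  qed
  have "0 \<notin> e ` eigvals A" using e by auto
  hence "independent (e ` eigvals A)" using pairwise_orthogonal_independent po by blast
  hence "finite (e ` eigvals A)" using independent_bound by blast
  thus ?thesis using finite_imageD inj by blast
qed

lemma orth_all_eig_zero:
  fixes A :: "real^'n^'n"
  assumes sym: "transpose A = A"
    and r: "\<And>v l. A *v v = l *\<^sub>R v \<Longrightarrow> r \<bullet> v = 0"
  shows "r = 0"
proof (rule ccontr)
  assume r0: "r \<noteq> 0"
  define U where "U = {y. \<forall>v l. A *v v = l *\<^sub>R v \<longrightarrow> y \<bullet> v = 0}"
  have U: "subspace U" unfolding U_def subspace_def by (auto simp: inner_add_left)
  have inv: "\<forall>y\<in>U. A *v y \<in> U"
  proof
    fix y assume "y \<in> U"
    hence y: "\<And>v l. A *v v = l *\<^sub>R v \<Longrightarrow> y \<bullet> v = 0" unfolding U_def by blast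
    have "(A *v y) \<bullet> v = 0" if "A *v v = l *\<^sub>R v" for v l
      using sym_inner[OF sym, of y v] that y[OF that] by simp
    thus "A *v y \<in> U" unfolding U_def by blast
  qed
  have "r \<in> U" using r unfolding U_def by blast
  hence "U \<noteq> {0}" using r0 by blast
  then obtain x where "x \<in> U" "norm x = 1" "A *v x = (x \<bullet> (A *v x)) *\<^sub>R x"
    using rayleigh_max[OF sym U inv] by blast
  hence "x \<bullet> x = 0" unfolding U_def by blast
  thus False using \<open>norm x = 1\<close> by simp
qed

lemma max_eig:
  fixes A :: "real^'n^'n"
  assumes sym: "transpose A = A"
  shows "Max (eigvals A) \<in> eigvals A" "\<And>y. y \<bullet> (A *v y) \<le> Max (eigvals A) * (y \<bullet> y)"
proof -
  obtain x where x: "norm x = 1" "A *v x = (x \<bullet> (A *v x)) *\<^sub>R x"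
      and b: "\<And>y. y \<bullet> (A *v y) \<le> (x \<bullet> (A *v x)) * (y \<bullet> y)"
    using rayleigh_max[OF sym subspace_UNIV] by blast
  define \<mu> where "\<mu> = x \<bullet> (A *v x)"
  have x2: "A *v x = \<mu> *\<^sub>R x" using x(2) unfolding \<mu>_def .
  have "x \<noteq> 0" using x(1) by auto
  hence mu: "\<mu> \<in> eigvals A" unfolding eigvals_def using x2 by blast
  have le: "l \<le> \<mu>" if lE: "l \<in> eigvals A" for l
  proof -
    obtain v where v: "v \<noteq> 0" "A *v v = l *\<^sub>R v" using lE unfolding eigvals_def by blast
    have "l * (v \<bullet> v) \<le> \<mu> * (v \<bullet> v)" using b[of v] v unfolding \<mu>_def by simp
    thus ?thesis using v by simp
  qed
  have M: "Max (eigvals A) = \<mu>" using eigvals_finite[OF sym] mu le by (intro Max_eqI) auto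
  show "Max (eigvals A) \<in> eigvals A" unfolding M by (rule mu)
  show "y \<bullet> (A *v y) \<le> Max (eigvals A) * (y \<bullet> y)" for y unfolding M \<mu>_def by (rule b)
qed

lemma neg_transpose: "transpose (-(A::real^'n^'n)) = - transpose A"
  by (simp add: transpose_def vec_eq_iff)
lemma neg_mv: "(-(A::real^'n^'n)) *v v = - (A *v v)"
  by (simp add: matrix_vector_mult_def vec_eq_iff sum_negf)

lemma min_eig:
  fixes A :: "real^'n^'n"
  assumes sym: "transpose A = A"
  shows "Min (eigvals A) \<in> eigvals A" "\<And>y. Min (eigvals A) * (y \<bullet> y) \<le> y \<bullet> (A *v y)"
proof -
  have sym': "transpose (-A) = -A" using sym by (simp add: neg_transpose)
  note neg = neg_mv[of A]
  obtain x where x: "norm x = 1" "(-A) *v x = (x \<bullet> ((-A) *v x)) *\<^sub>R x"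
      and b: "\<And>y. y \<bullet> ((-A) *v y) \<le> (x \<bullet> ((-A) *v x)) * (y \<bullet> y)"
    using rayleigh_max[OF sym' subspace_UNIV] by blast
  define \<mu> where "\<mu> = x \<bullet> (A *v x)"
  have "- (A *v x) = - (\<mu> *\<^sub>R x)" using x(2) unfolding neg \<mu>_def by (simp only: inner_minus_right scaleR_minus_left)
  hence x2: "A *v x = \<mu> *\<^sub>R x" by simp
  have b2: "\<mu> * (y \<bullet> y) \<le> y \<bullet> (A *v y)" for y using b[of y] unfolding neg \<mu>_def by (simp only: inner_minus_right mult_minus_left neg_le_iff_le)
  have "x \<noteq> 0" using x(1) by auto
  hence mu: "\<mu> \<in> eigvals A" unfolding eigvals_def using x2 by blast
  have le: "\<mu> \<le> l" if lE: "l \<in> eigvals A" for l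
  proof -
    obtain v where v: "v \<noteq> 0" "A *v v = l *\<^sub>R v" using lE unfolding eigvals_def by blast
    have "\<mu> * (v \<bullet> v) \<le> l * (v \<bullet> v)" using b2[of v] v by simp
    thus ?thesis using v by simp
  qed
  have M: "Min (eigvals A) = \<mu>" using eigvals_finite[OF sym] mu le by (intro Min_eqI) auto
  show "Min (eigvals A) \<in> eigvals A" unfolding M by (rule mu)
  show "Min (eigvals A) * (y \<bullet> y) \<le> y \<bullet> (A *v y)" for y unfolding M by (rule b2)
qed

definition gsum :: "real set \<Rightarrow> (real \<Rightarrow> real) \<Rightarrow> real \<Rightarrow> real" where
  "gsum L w x = (\<Sum>l\<in>L. w l * l / (1 - l * x)^2)"
definition fsum :: "real set \<Rightarrow> (real \<Rightarrow> real) \<Rightarrow> real \<Rightarrow> real" where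
  "fsum L w x = (\<Sum>l\<in>L. w l / (1 - l * x))"

lemma tangent_term:
  fixes r s :: real assumes "r > 0" "s > 0"
  shows "1 / r \<ge> 1 / s + (s - r) / s^2"
proof -
  have "0 \<le> (s - r)^2 / (r * s^2)" using assms by simp
  also have "(s - r)^2 / (r * s^2) = 1/r - 1/s - (s - r)/s^2"
    using assms by (simp add: field_simps power2_eq_square)
  finally show ?thesis by simp
qed

lemma tangent:
  assumes "finite L" "\<forall>l\<in>L. w l \<ge> 0" "\<forall>l\<in>L. 1 - l*x > 0" "\<forall>l\<in>L. 1 - l*x0 > 0"
  shows "fsum L w x \<ge> fsum L w x0 + gsum L w x0 * (x - x0)"
proof -
  have "w l / (1 - l*x) \<ge> w l / (1 - l*x0) + w l * l / (1 - l * x0)^2 * (x - x0)" if l: "l \<in> L" for l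
  proof -
    have t: "1 / (1 - l*x) \<ge> 1 / (1 - l*x0) + ((1 - l*x0) - (1 - l*x)) / (1 - l*x0)^2"
      using tangent_term assms(3,4) l by blast
    have "w l * (1 / (1 - l*x)) \<ge> w l * (1 / (1 - l*x0) + ((1 - l*x0) - (1 - l*x)) / (1 - l*x0)^2)"
      using t assms(2) l by (intro mult_left_mono) auto
    thus ?thesis by (simp add: algebra_simps add_divide_distrib diff_divide_distrib)
  qed
  hence "(\<Sum>l\<in>L. w l / (1 - l*x0) + w l * l / (1 - l * x0)^2 * (x - x0)) \<le> fsum L w x"
    unfolding fsum_def by (intro sum_mono) auto
  thus ?thesis unfolding fsum_def gsum_def by (simp add: sum.distrib sum_distrib_right)
qed

lemma pos_factor:
  fixes l x lmin lmax :: real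
  assumes "lmin < 0" "0 < lmax" "lmin \<le> l" "l \<le> lmax" "1/lmin \<le> x" "x \<le> 1/lmax"
  shows "1 - l*x \<ge> 0" "1 - l*x = 0 \<Longrightarrow> (l = lmax \<and> x = 1/lmax) \<or> (l = lmin \<and> x = 1/lmin)"
proof -
  have "(1 - l*x \<ge> 0) \<and> (1 - l*x = 0 \<longrightarrow> (l = lmax \<and> x = 1/lmax) \<or> (l = lmin \<and> x = 1/lmin))"
  proof (cases "x \<ge> 0")
    case True
    have "lmax * x \<le> 1" using assms(2,6) True by (simp add: field_simps)
    moreover have "l * x \<le> lmax * x" using assms(4) True by (intro mult_right_mono)
    moreover have "l = lmax \<and> x = 1/lmax" if "l * x = 1"
    proof -
      have "lmax * x = 1" using that \<open>lmax * x \<le> 1\<close> \<open>l * x \<le> lmax * x\<close> by linarith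
      hence "x \<noteq> 0" by auto
      hence "x > 0" using True by simp
      have "x = 1/lmax" using \<open>lmax * x = 1\<close> assms(2) by (simp add: field_simps)
      moreover have "(lmax - l) * x = 0" using \<open>lmax * x = 1\<close> that by (simp add: algebra_simps)
      ultimately show ?thesis using \<open>x > 0\<close> by simp
    qed
    ultimately show ?thesis by auto
  next
    case False
    have "lmin * x \<le> 1" using assms(1,5) False by (simp add: field_simps)
    moreover have "l * x \<le> lmin * x" using assms(3) False by (intro mult_right_mono_neg) auto
    moreover have "l = lmin \<and> x = 1/lmin" if "l * x = 1"
    proof -
      have "lmin * x = 1" using that \<open>lmin * x \<le> 1\<close> \<open>l * x \<le> lmin * x\<close> by linarith
      hence "x = 1/lmin" using assms(1) by (auto simp: field_simps)
      moreover have "(lmin - l) * x = 0" using \<open>lmin * x = 1\<close> that by (simp add: algebra_simps)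
      ultimately show ?thesis using False by simp
    qed
    ultimately show ?thesis by auto
  qed
  thus "1 - l*x \<ge> 0" "1 - l*x = 0 \<Longrightarrow> (l = lmax \<and> x = 1/lmax) \<or> (l = lmin \<and> x = 1/lmin)" by auto
qed

lemma pole_right:
  assumes fin: "finite L" and w: "\<forall>l\<in>L. w l > 0" and M: "M \<in> L" "M > 0" and le: "\<forall>l\<in>L. l \<le> M"
  shows "\<exists>x. 0 \<le> x \<and> x < 1/M \<and> gsum L w x > 0"
proof -
  define K where "K = (\<Sum>l\<in>L. \<bar>w l * l\<bar>)"
  define c where "c = w M * M"
  have K0: "K \<ge> 0" unfolding K_def by (intro sum_nonneg) auto
  have c0: "c > 0" unfolding c_def using w M by simp
  define s where "s = min (1/2) (c / (2 * (K + 1)))"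
  have cK: "c / (2 * (K + 1)) > 0" using c0 K0 by simp
  have s0: "s > 0" "s \<le> 1/2" "s \<le> c / (2 * (K + 1))" unfolding s_def using cK by (auto simp del: divide_const_simps min_less_iff_conj simp: min_def)
  define x where "x = (1 - s) / M"
  have x0: "0 \<le> x" "x < 1/M" unfolding x_def using s0 M by (auto simp: field_simps)
  have sM: "1 - M * x = s" unfolding x_def using M by (simp add: field_simps)
  have other: "w l * l / (1 - l * x)^2 \<ge> - \<bar>w l * l\<bar>" if l: "l \<in> L" for l
  proof (cases "l \<ge> 0")
    case True
    have "w l > 0" using w l by blast
    hence "w l * l / (1 - l * x)^2 \<ge> 0" using True by (intro divide_nonneg_nonneg) auto
    thus ?thesis by linarith
  next
    case False
    have "l * x \<le> 0" using False x0 by (simp add: mult_nonpos_nonneg)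
    hence "1 \<le> 1 - l * x" by simp
    hence d: "(1 - l * x)^2 \<ge> 1" by (rule one_le_power)
    have "w l > 0" using w l by blast
    hence a: "w l * l \<le> 0" using False by (intro mult_nonneg_nonpos) auto
    have "w l * l \<le> w l * l / (1 - l * x)^2"
    proof -
      have "w l * l * (1 - l * x)^2 \<le> w l * l * 1" using d a by (rule mult_left_mono_neg)
      thus ?thesis using d a by (simp add: le_divide_eq)
    qed
    thus ?thesis using a by simp
  qed
  have "gsum L w x = c / s^2 + (\<Sum>l\<in>L-{M}. w l * l / (1 - l * x)^2)"
    unfolding gsum_def c_def using fin M(1) sM by (simp add: sum.remove)
  also have "(\<Sum>l\<in>L-{M}. w l * l / (1 - l * x)^2) \<ge> (\<Sum>l\<in>L-{M}. - \<bar>w l * l\<bar>)"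
    using other by (intro sum_mono) auto
  moreover have "(\<Sum>l\<in>L-{M}. - \<bar>w l * l\<bar>) \<ge> - K"
  proof -
    have "(\<Sum>l\<in>L-{M}. \<bar>w l * l\<bar>) \<le> K" unfolding K_def using fin by (intro sum_mono2) auto
    thus ?thesis by (simp add: sum_negf)
  qed
  moreover have "c / s^2 > K"
  proof -
    have "c / s^2 \<ge> c / s" using s0 c0 by (simp add: frac_le power2_eq_square mult_le_cancel_left1)
    moreover have "c / s \<ge> 2 * (K + 1)" using s0 c0 K0 by (simp add: field_simps)
    ultimately have "2 * (K + 1) \<le> c / s^2" by (rule order_trans[rotated])
    moreover have "K < 2 * (K + 1)" using K0 by simp
    ultimately show ?thesis by (rule less_le_trans[rotated])
  qed
  ultimately have "gsum L w x > 0" by linarith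
  thus ?thesis using x0 by blast
qed

lemma pole_left:
  assumes fin: "finite L" and w: "\<forall>l\<in>L. w l > 0" and m: "m \<in> L" "m < 0" and le: "\<forall>l\<in>L. m \<le> l"
  shows "\<exists>x. 1/m < x \<and> x \<le> 0 \<and> gsum L w x < 0"
proof -
  have "\<exists>x. 0 \<le> x \<and> x < 1/(-m) \<and> gsum (uminus ` L) (\<lambda>l. w (-l)) x > 0"
    using fin w m le by (intro pole_right) auto
  then obtain x where x: "0 \<le> x" "x < 1/(-m)" "gsum (uminus ` L) (\<lambda>l. w (-l)) x > 0" by blast
  have "gsum (uminus ` L) (\<lambda>l. w (-l)) x = (\<Sum>l\<in>L. w l * (-l) / (1 - (-l) * x)^2)"
    unfolding gsum_def by (subst sum.reindex) (auto simp: inj_on_def)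
  also have "\<dots> = - gsum L w (-x)" unfolding gsum_def by (simp add: sum_negf[symmetric])
  finally have "gsum L w (-x) < 0" using x(3) by simp
  moreover have "1/m < -x" using x(2) m(2) by (simp add: field_simps)
  ultimately show ?thesis using x(1) by (intro exI[of _ "-x"]) auto
qed

lemma gsum_cont:
  assumes "\<forall>x\<in>S. \<forall>l\<in>L. 1 - l*x \<noteq> 0"
  shows "continuous_on S (gsum L w)"
  unfolding gsum_def using assms by (intro continuous_intros) auto

lemma exists_x0:
  assumes fin: "finite L" and w: "\<forall>l\<in>L. w l > 0" and lm: "lmin < 0" "0 < lmax"
    and rng: "\<forall>l\<in>L. lmin \<le> l \<and> l \<le> lmax"
  shows "\<exists>x0. 1/lmin \<le> x0 \<and> x0 \<le> 1/lmax \<and> (\<forall>l\<in>L. 1 - l*x0 \<noteq> 0) \<and>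
     (gsum L w x0 = 0 \<or> (x0 = 1/lmax \<and> lmax \<notin> L \<and> gsum L w x0 \<le> 0)
        \<or> (x0 = 1/lmin \<and> lmin \<notin> L \<and> gsum L w x0 \<ge> 0))"
proof -
  have a0: "1/lmin < 0" and b0: "0 < 1/lmax" using lm by auto
  have ab: "1/lmin \<le> 1/lmax" using a0 b0 by (rule less_imp_le[OF less_trans])
  obtain b' where b': "0 \<le> b'" "b' \<le> 1/lmax"
     "(b' = 1/lmax \<and> lmax \<notin> L) \<or> (b' < 1/lmax \<and> gsum L w b' > 0)"
  proof (cases "lmax \<in> L")
    case True
    then obtain x where "0 \<le> x" "x < 1/lmax" "gsum L w x > 0"
      using pole_right[OF fin w True lm(2)] rng by blast
    thus ?thesis using that[of x] by auto
  next
    case False thus ?thesis using that[of "1/lmax"] b0 by auto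
  qed
  obtain a' where a': "1/lmin \<le> a'" "a' \<le> 0"
     "(a' = 1/lmin \<and> lmin \<notin> L) \<or> (1/lmin < a' \<and> gsum L w a' < 0)"
  proof (cases "lmin \<in> L")
    case True
    then obtain x where "1/lmin < x" "x \<le> 0" "gsum L w x < 0"
      using pole_left[OF fin w True lm(1)] rng by blast
    thus ?thesis using that[of x] by auto
  next
    case False thus ?thesis using that[of "1/lmin"] a0 by auto
  qed
  have np: "1 - l*x \<noteq> 0" if x: "a' \<le> x" "x \<le> b'" and l: "l \<in> L" for x l
  proof
    assume z: "1 - l*x = 0"
    have "(l = lmax \<and> x = 1/lmax) \<or> (l = lmin \<and> x = 1/lmin)"
      using pos_factor(2)[OF lm, of l x] rng l x a' b' z by auto
    thus False
    proof
      assume "l = lmax \<and> x = 1/lmax"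
      hence "b' = 1/lmax" "lmax \<in> L" using x b' l by auto
      thus False using b'(3) by auto
    next
      assume "l = lmin \<and> x = 1/lmin"
      hence "a' = 1/lmin" "lmin \<in> L" using x a' l by auto
      thus False using a'(3) by auto
    qed
  qed
  show ?thesis
  proof (cases "gsum L w b' \<le> 0")
    case True
    hence "b' = 1/lmax \<and> lmax \<notin> L" using b'(3) by auto
    thus ?thesis using True np[of b'] a' b' ab by (intro exI[of _ b']) auto
  next
    case gb: False
    show ?thesis
    proof (cases "gsum L w a' \<ge> 0")
      case True
      hence "a' = 1/lmin \<and> lmin \<notin> L" using a'(3) by auto
      thus ?thesis using True np[of a'] a' b' ab by (intro exI[of _ a']) auto
    next
      case False
      have "continuous_on {a'..b'} (gsum L w)" using np by (intro gsum_cont) auto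
      then obtain x where "a' \<le> x" "x \<le> b'" "gsum L w x = 0"
        using IVT'[of "gsum L w" a' 0 b'] False gb a' b' by auto
      thus ?thesis using np[of x] a' b' by (intro exI[of _ x]) auto
    qed
  qed
qed

abbreviation pj :: "real^'n^'n \<Rightarrow> real \<Rightarrow> real^'n" where "pj A l \<equiv> eigproj A l ones"

lemma pj_eig: "A *v pj A l = l *\<^sub>R pj A l"
  by (rule eigproj_props(1))

lemma pj_w: "ones \<bullet> pj A l = pj A l \<bullet> pj A l"
proof -
  have "(ones - pj A l) \<bullet> pj A l = 0" by (rule eigproj_props(2)[OF pj_eig])
  thus ?thesis by (simp add: inner_diff_left)
qed

lemma pj_orth:
  assumes "transpose A = A" "l \<noteq> m"
  shows "pj A l \<bullet> pj A m = 0"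
  using eig_orth[OF assms(1) pj_eig pj_eig assms(2)] .

lemma ones_decomp:
  fixes A :: "real^'n^'n"
  assumes sym: "transpose A = A"
  shows "ones = (\<Sum>l\<in>eigvals A. pj A l)"
proof -
  have fin: "finite (eigvals A)" by (rule eigvals_finite[OF sym])
  have "ones - (\<Sum>l\<in>eigvals A. pj A l) = 0"
  proof (rule orth_all_eig_zero[OF sym])
    fix v m assume v: "A *v v = m *\<^sub>R v"
    show "(ones - (\<Sum>l\<in>eigvals A. pj A l)) \<bullet> v = 0"
    proof (cases "v = 0")
      case True thus ?thesis by simp
    next
      case False
      hence mE: "m \<in> eigvals A" unfolding eigvals_def using v by blast
      have z: "pj A l \<bullet> v = 0" if "l \<in> eigvals A - {m}" for l
        using eig_orth[OF sym pj_eig v] that by auto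
      have "(\<Sum>l\<in>eigvals A. pj A l) \<bullet> v = (\<Sum>l\<in>eigvals A. pj A l \<bullet> v)" by (rule inner_sum_left)
      also have "\<dots> = pj A m \<bullet> v + (\<Sum>l\<in>eigvals A - {m}. pj A l \<bullet> v)"
        using fin mE by (rule sum.remove)
      also have "(\<Sum>l\<in>eigvals A - {m}. pj A l \<bullet> v) = 0" using z by (intro sum.neutral) auto
      finally have "(\<Sum>l\<in>eigvals A. pj A l) \<bullet> v = pj A m \<bullet> v" by simp
      moreover have "(ones - pj A m) \<bullet> v = 0" by (rule eigproj_props(2)[OF v])
      ultimately show ?thesis by (simp add: inner_diff_left)
    qed
  qed
  thus ?thesis by simp
qed

lemma ones_decomp_L:
  fixes A :: "real^'n^'n"
  assumes sym: "transpose A = A"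
  shows "ones = (\<Sum>l\<in>{l\<in>eigvals A. ones \<bullet> pj A l \<noteq> 0}. pj A l)"
proof -
  have fin: "finite (eigvals A)" by (rule eigvals_finite[OF sym])
  have "(\<Sum>l\<in>{l\<in>eigvals A. ones \<bullet> pj A l \<noteq> 0}. pj A l) = (\<Sum>l\<in>eigvals A. pj A l)"
  proof (rule sum.mono_neutral_left[OF fin])
    show "\<forall>i\<in>eigvals A - {l \<in> eigvals A. ones \<bullet> pj A l \<noteq> 0}. pj A i = 0"
      by (auto simp: pj_w)
  qed auto
  thus ?thesis using ones_decomp[OF sym] by simp
qed

lemma inner_sums:
  fixes A :: "real^'n^'n"
  assumes sym: "transpose A = A" and fin: "finite L"
  shows "(\<Sum>l\<in>L. c l *\<^sub>R pj A l) \<bullet> (\<Sum>m\<in>L. d m *\<^sub>R pj A m) = (\<Sum>l\<in>L. c l * d l * (ones \<bullet> pj A l))"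
proof -
  have "(\<Sum>l\<in>L. c l *\<^sub>R pj A l) \<bullet> (\<Sum>m\<in>L. d m *\<^sub>R pj A m)
      = (\<Sum>l\<in>L. \<Sum>m\<in>L. c l * d m * (pj A l \<bullet> pj A m))"
    unfolding inner_sum_left by (simp add: inner_sum_right sum_distrib_left mult.assoc mult.left_commute)
  also have "\<dots> = (\<Sum>l\<in>L. c l * d l * (ones \<bullet> pj A l))"
  proof (rule sum.cong[OF refl])
    fix l assume l: "l \<in> L"
    have "(\<Sum>m\<in>L. c l * d m * (pj A l \<bullet> pj A m)) = c l * d l * (pj A l \<bullet> pj A l) + (\<Sum>m\<in>L - {l}. c l * d m * (pj A l \<bullet> pj A m))"
      using fin l by (rule sum.remove)
    also have "(\<Sum>m\<in>L - {l}. c l * d m * (pj A l \<bullet> pj A m)) = 0"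
      using pj_orth[OF sym] by (intro sum.neutral) auto
    finally show "(\<Sum>m\<in>L. c l * d m * (pj A l \<bullet> pj A m)) = c l * d l * (ones \<bullet> pj A l)"
      by (simp add: pj_w)
  qed
  finally show ?thesis .
qed

lemma ones_sum:
  "ones \<bullet> (\<Sum>l\<in>L. c l *\<^sub>R pj A l) = (\<Sum>l\<in>L. c l * (ones \<bullet> pj A l))"
  by (simp add: inner_sum_right)

lemma A_sum:
  "A *v (\<Sum>l\<in>L. c l *\<^sub>R pj A l) = (\<Sum>l\<in>L. (c l * l) *\<^sub>R pj A l)"
  by (simp add: linear_sum[OF matrix_vector_mul_linear] matrix_vector_mult_scaleR pj_eig)

abbreviation LL :: "real^'n^'n \<Rightarrow> real set" where
  "LL A \<equiv> {l\<in>eigvals A. ones \<bullet> pj A l \<noteq> 0}"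
abbreviation ww :: "real^'n^'n \<Rightarrow> real \<Rightarrow> real" where
  "ww A l \<equiv> ones \<bullet> pj A l"

lemma u_props:
  fixes A :: "real^'n^'n"
  assumes sym: "transpose A = A" and np: "\<forall>l\<in>LL A. 1 - l*x \<noteq> 0"
  defines "u \<equiv> (\<Sum>l\<in>LL A. (1 / (1 - l*x)) *\<^sub>R pj A l)"
  shows "u - x *\<^sub>R (A *v u) = ones"
    and "ones \<bullet> u = fsum (LL A) (ww A) x"
    and "u \<bullet> (A *v u) = gsum (LL A) (ww A) x"
    and "ones \<bullet> u - u \<bullet> u = - x * gsum (LL A) (ww A) x"
proof -
  have fin: "finite (LL A)" using eigvals_finite[OF sym] by simp
  define c where "c l = 1 / (1 - l*x)" for l
  have u: "u = (\<Sum>l\<in>LL A. c l *\<^sub>R pj A l)" unfolding u_def c_def ..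
  have "u - x *\<^sub>R (A *v u) = (\<Sum>l\<in>LL A. (c l - x * (c l * l)) *\<^sub>R pj A l)"
    unfolding u A_sum by (simp add: scaleR_sum_right sum_subtractf[symmetric] scaleR_diff_left)
  also have "\<dots> = (\<Sum>l\<in>LL A. pj A l)"
  proof (rule sum.cong[OF refl])
    fix l assume "l \<in> LL A"
    hence "1 - l*x \<noteq> 0" using np by blast
    hence "c l - x * (c l * l) = 1" unfolding c_def by (simp add: field_simps)
    thus "(c l - x * (c l * l)) *\<^sub>R pj A l = pj A l" by simp
  qed
  also have "\<dots> = ones" using ones_decomp_L[OF sym] by simp
  finally show "u - x *\<^sub>R (A *v u) = ones" .
  show "ones \<bullet> u = fsum (LL A) (ww A) x"
    unfolding u ones_sum fsum_def c_def by (simp add: mult.commute)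
  have "u \<bullet> (A *v u) = (\<Sum>l\<in>LL A. c l * (c l * l) * ww A l)"
    unfolding u A_sum by (rule inner_sums[OF sym fin])
  also have "\<dots> = gsum (LL A) (ww A) x"
    unfolding gsum_def c_def by (intro sum.cong refl) (simp add: power2_eq_square field_simps)
  finally show "u \<bullet> (A *v u) = gsum (LL A) (ww A) x" .
  have uu: "u \<bullet> u = (\<Sum>l\<in>LL A. c l * c l * ww A l)"
    unfolding u using inner_sums[OF sym fin, of c c] by simp
  have "ones \<bullet> u - u \<bullet> u = (\<Sum>l\<in>LL A. c l * ww A l - c l * c l * ww A l)"
    unfolding uu by (simp add: u ones_sum sum_subtractf)
  also have "\<dots> = (\<Sum>l\<in>LL A. - x * (ww A l * l / (1 - l * x)^2))"
  proof (rule sum.cong[OF refl])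
    fix l assume "l \<in> LL A"
    hence d0: "1 - l*x \<noteq> 0" using np by blast
    define d where "d = 1 - l*x"
    have d: "d \<noteq> 0" using d0 d_def by simp
    have "1/d * ww A l - 1/d * (1/d) * ww A l = (d - 1) * ww A l / d^2"
      using d by (simp add: field_simps power2_eq_square)
    also have "d - 1 = - l * x" unfolding d_def by simp
    finally show "c l * ww A l - c l * c l * ww A l = - x * (ww A l * l / (1 - l * x)^2)"
      unfolding c_def d_def[symmetric] by (simp add: algebra_simps)
  qed
  also have "\<dots> = - x * gsum (LL A) (ww A) x" unfolding gsum_def by (simp add: sum_distrib_left)
  finally show "ones \<bullet> u - u \<bullet> u = - x * gsum (LL A) (ww A) x" .
qed

lemma upper:
  fixes A :: "real^'n^'n"
  assumes sym: "transpose A = A" and np: "\<forall>l\<in>LL A. 1 - l*x \<noteq> 0"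
    and psd: "\<forall>y. 0 \<le> y \<bullet> y - x * (y \<bullet> (A *v y))"
    and v1: "ones \<bullet> v = (norm v)^2" and v2: "v \<bullet> (A *v v) = 0"
  shows "(norm v)^2 \<le> fsum (LL A) (ww A) x"
proof -
  define u where "u = (\<Sum>l\<in>LL A. (1 / (1 - l*x)) *\<^sub>R pj A l)"
  note U = u_props[OF sym np, folded u_def]
  have sy: "(A *v u) \<bullet> v = u \<bullet> (A *v v)" by (rule sym_inner[OF sym])
  have "0 \<le> (u - v) \<bullet> (u - v) - x * ((u - v) \<bullet> (A *v (u - v)))" using psd by blast
  also have "(u - v) \<bullet> (u - v) - x * ((u - v) \<bullet> (A *v (u - v)))
     = (u \<bullet> u - x * (u \<bullet> (A *v u))) - 2 * ((u - x *\<^sub>R (A *v u)) \<bullet> v) + (v \<bullet> v - x * (v \<bullet> (A *v v)))"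
    using sy by (simp add: inner_diff_left inner_diff_right matrix_vector_mult_diff_distrib algebra_simps inner_commute)
  also have "u \<bullet> u - x * (u \<bullet> (A *v u)) = ones \<bullet> u"
    using U(1) by (metis inner_commute inner_diff_right inner_scaleR_right)
  also have "(u - x *\<^sub>R (A *v u)) \<bullet> v = (norm v)^2" using U(1) v1 by simp
  also have "v \<bullet> v - x * (v \<bullet> (A *v v)) = (norm v)^2" using v2 by (simp add: power2_norm_eq_inner)
  finally show ?thesis using U(2) by simp
qed

lemma lower:
  fixes A :: "real^'n^'n"
  assumes sym: "transpose A = A" and np: "\<forall>l\<in>LL A. 1 - l*x \<noteq> 0"
    and cs: "gsum (LL A) (ww A) x = 0 \<or>
       (x \<noteq> 0 \<and> 1/x \<in> eigvals A \<and> 1/x \<notin> LL A \<and> - x * gsum (LL A) (ww A) x \<ge> 0)"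
  shows "\<exists>v. ones \<bullet> v = (norm v)^2 \<and> v \<bullet> (A *v v) = 0 \<and> (norm v)^2 = fsum (LL A) (ww A) x"
proof -
  define u where "u = (\<Sum>l\<in>LL A. (1 / (1 - l*x)) *\<^sub>R pj A l)"
  note U = u_props[OF sym np, folded u_def]
  let ?g = "gsum (LL A) (ww A) x"
  show ?thesis
  proof (cases "?g = 0")
    case True
    thus ?thesis using U(2-4) by (intro exI[of _ u]) (simp add: power2_norm_eq_inner)
  next
    case False
    with cs have x0: "x \<noteq> 0" and mE: "1/x \<in> eigvals A" and mL: "1/x \<notin> LL A" and gx: "- x * ?g \<ge> 0"
      by auto
    define m where "m = 1/x"
    obtain e where e: "e \<noteq> 0" "A *v e = m *\<^sub>R e" using mE unfolding eigvals_def m_def by blast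
    define z where "z = (sqrt (- x * ?g) / norm e) *\<^sub>R e"
    have Az: "A *v z = m *\<^sub>R z" unfolding z_def using e(2) by (simp add: matrix_vector_mult_scaleR)
    have zz: "z \<bullet> z = - x * ?g" unfolding z_def using e(1) gx
      by (simp add: power2_norm_eq_inner[symmetric] power_divide)
    have wm: "ww A m = 0" using mE mL unfolding m_def by auto
    hence "pj A m = 0" using pj_w[of A m] by simp
    hence oz: "ones \<bullet> z = 0" using eigproj_props(2)[OF Az, of ones] by simp
    have pz: "pj A l \<bullet> z = 0" if "l \<in> LL A" for l
    proof -
      have "l \<noteq> m" using that mL unfolding m_def by blast
      thus ?thesis using eig_orth[OF sym pj_eig Az] by blast
    qed
    have uz: "u \<bullet> z = 0" unfolding u_def inner_sum_left using pz by (simp add: sum.neutral)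
    have Auz: "(A *v u) \<bullet> z = 0" using sym_inner[OF sym, of u z] Az uz by simp
    have Azu: "(A *v z) \<bullet> u = 0" using Az uz by (simp add: inner_commute)
    define v where "v = u + z"
    have "v \<bullet> (A *v v) = u \<bullet> (A *v u) + z \<bullet> (A *v z)"
      unfolding v_def using Auz Azu by (simp add: inner_add_left inner_add_right matrix_vector_right_distrib inner_commute)
    also have "z \<bullet> (A *v z) = m * (- x * ?g)" using Az zz by simp
    also have "m * (- x * ?g) = - ?g" unfolding m_def using x0 by simp
    finally have v2: "v \<bullet> (A *v v) = 0" using U(3) by simp
    have vv: "v \<bullet> v = u \<bullet> u + z \<bullet> z" unfolding v_def using uz
      by (simp add: inner_add_left inner_add_right inner_commute)
    have ov: "ones \<bullet> v = ones \<bullet> u" unfolding v_def using oz by (simp add: inner_add_right)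
    have "ones \<bullet> v = (norm v)^2" using vv ov zz U(4) by (simp add: power2_norm_eq_inner)
    moreover have "(norm v)^2 = fsum (LL A) (ww A) x" using \<open>ones \<bullet> v = (norm v)^2\<close> ov U(2) by simp
    ultimately show ?thesis using v2 by blast
  qed
qed

lemma axis_quad: "(axis i 1) \<bullet> ((A::real^'n^'n) *v axis j 1) = A$i$j"
  by (simp add: inner_axis' matrix_vector_mult_basis column_def)

lemma quad2:
  fixes A :: "real^'n^'n"
  assumes sym: "transpose A = A" and diag: "\<forall>i. A$i$i = 0"
  shows "(axis i 1 + t *\<^sub>R axis j 1) \<bullet> (A *v (axis i 1 + t *\<^sub>R axis j 1)) = 2 * t * A$i$j"
proof -
  have s: "A$j$i = A$i$j" using sym unfolding transpose_def by (metis vec_lambda_beta)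
  show ?thesis
    by (simp add: inner_add_left inner_add_right matrix_vector_right_distrib matrix_vector_mult_scaleR
        axis_quad diag s algebra_simps)
qed

lemma semidef_zero:
  fixes A :: "real^'n^'n"
  assumes sym: "transpose A = A" and diag: "\<forall>i. A$i$i = 0"
    and sd: "(\<forall>y. y \<bullet> (A *v y) \<le> 0) \<or> (\<forall>y. y \<bullet> (A *v y) \<ge> 0)"
  shows "A = 0"
proof -
  have "A$i$j = 0" for i j
  proof (cases "i = j")
    case True thus ?thesis using diag by simp
  next
    case False
    have p: "(axis i 1 + 1 *\<^sub>R axis j 1) \<bullet> (A *v (axis i 1 + 1 *\<^sub>R axis j 1)) = 2 * 1 * A$i$j"
      by (rule quad2[OF sym diag])
    have n: "(axis i 1 + (-1) *\<^sub>R axis j 1) \<bullet> (A *v (axis i 1 + (-1) *\<^sub>R axis j 1)) = 2 * (-1) * A$i$j"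
      by (rule quad2[OF sym diag])
    from sd show ?thesis
    proof
      assume a: "\<forall>y. y \<bullet> (A *v y) \<le> 0"
      have "2 * 1 * A$i$j \<le> 0" unfolding p[symmetric] using a by blast
      moreover have "2 * (-1) * A$i$j \<le> 0" unfolding n[symmetric] using a by blast
      ultimately show ?thesis by simp
    next
      assume a: "\<forall>y. y \<bullet> (A *v y) \<ge> 0"
      have "2 * 1 * A$i$j \<ge> 0" unfolding p[symmetric] using a by blast
      moreover have "2 * (-1) * A$i$j \<ge> 0" unfolding n[symmetric] using a by blast
      ultimately show ?thesis by simp
    qed
  qed
  thus ?thesis by (simp add: vec_eq_iff)
qed

lemma W_eq:
  "W_A A x = (if \<exists>l\<in>LL A. 1 - l*x = 0 then PInfty else ereal (fsum (LL A) (ww A) x))"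
  by (simp add: W_A_def Let_def fsum_def)

theorem proposition2:
  fixes E :: "'n::finite \<Rightarrow> 'n \<Rightarrow> bool" and A :: "real^'n^'n"
  assumes "CARD('n) \<ge> 3"
    and "\<forall>i j. E i j \<longrightarrow> E j i" and "\<forall>i. \<not> E i i"
    and "weighted_adj E A" and "A \<noteq> 0"
  shows "\<exists>x0 \<in> {1 / Min (eigvals A) .. 1 / Max (eigvals A)}.
           (\<forall>x \<in> {1 / Min (eigvals A) .. 1 / Max (eigvals A)}. W_A A x0 \<le> W_A A x) \<and>
           W_A A x0 = (SUP v \<in> {v \<in> S_set. v \<bullet> (A *v v) = 0}. ereal ((norm v)\<^sup>2))"
proof -
  have sym: "transpose A = A" and diag: "\<forall>i. A$i$i = 0"
    using assms(4) unfolding weighted_adj_def by auto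
  have fin: "finite (eigvals A)" by (rule eigvals_finite[OF sym])
  define lmax where "lmax = Max (eigvals A)"
  define lmin where "lmin = Min (eigvals A)"
  have lmaxE: "lmax \<in> eigvals A" and rmax: "\<And>y. y \<bullet> (A *v y) \<le> lmax * (y \<bullet> y)"
    unfolding lmax_def using max_eig[OF sym] by auto
  have lminE: "lmin \<in> eigvals A" and rmin: "\<And>y. lmin * (y \<bullet> y) \<le> y \<bullet> (A *v y)"
    unfolding lmin_def using min_eig[OF sym] by auto
  have lmax0: "0 < lmax"
  proof (rule ccontr)
    assume "\<not> 0 < lmax"
    hence "\<forall>y. y \<bullet> (A *v y) \<le> 0"
      using rmax by (meson inner_ge_zero mult_nonpos_nonneg not_less order_trans)
    hence "A = 0" using semidef_zero[OF sym diag] by blast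
    thus False using assms(5) by blast
  qed
  have lmin0: "lmin < 0"
  proof (rule ccontr)
    assume "\<not> lmin < 0"
    hence "\<forall>y. y \<bullet> (A *v y) \<ge> 0"
      using rmin by (meson inner_ge_zero mult_nonneg_nonneg not_less order_trans)
    hence "A = 0" using semidef_zero[OF sym diag] by blast
    thus False using assms(5) by blast
  qed
  have finL: "finite (LL A)" using fin by simp
  have wpos: "\<forall>l\<in>LL A. ww A l > 0"
  proof
    fix l assume "l \<in> LL A"
    hence "ww A l \<noteq> 0" by simp
    moreover have "ww A l \<ge> 0" using pj_w[of A l] by simp
    ultimately show "ww A l > 0" by simp
  qed
  have rng: "\<forall>l\<in>LL A. lmin \<le> l \<and> l \<le> lmax"
    unfolding lmin_def lmax_def using fin by auto
  obtain x0 where x0: "1/lmin \<le> x0" "x0 \<le> 1/lmax" and np0: "\<forall>l\<in>LL A. 1 - l*x0 \<noteq> 0"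
    and cs: "gsum (LL A) (ww A) x0 = 0 \<or> (x0 = 1/lmax \<and> lmax \<notin> LL A \<and> gsum (LL A) (ww A) x0 \<le> 0)
        \<or> (x0 = 1/lmin \<and> lmin \<notin> LL A \<and> gsum (LL A) (ww A) x0 \<ge> 0)"
    using exists_x0[OF finL wpos lmin0 lmax0 rng] by blast
  let ?f = "fsum (LL A) (ww A)"
  let ?g = "gsum (LL A) (ww A)"
  have W0: "W_A A x0 = ereal (?f x0)" using np0 by (simp add: W_eq)
  have posf: "1 - l*x \<ge> 0" if "l \<in> LL A" "1/lmin \<le> x" "x \<le> 1/lmax" for l x
    using pos_factor(1)[OF lmin0 lmax0, of l x] rng that by auto
  have pos0: "\<forall>l\<in>LL A. 1 - l*x0 > 0" using posf[OF _ x0] np0 by force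
  have minimal: "W_A A x0 \<le> W_A A x" if x: "1/lmin \<le> x" "x \<le> 1/lmax" for x
  proof (cases "\<exists>l\<in>LL A. 1 - l*x = 0")
    case True thus ?thesis by (simp add: W_eq)
  next
    case False
    hence posx: "\<forall>l\<in>LL A. 1 - l*x > 0" using posf[OF _ x] by force
    have "?f x \<ge> ?f x0 + ?g x0 * (x - x0)"
      using tangent[OF finL _ posx pos0] wpos by (simp add: less_imp_le)
    moreover have "?g x0 * (x - x0) \<ge> 0"
      using cs
    proof (elim disjE conjE)
      assume "?g x0 = 0" thus ?thesis by simp
    next
      assume "x0 = 1/lmax" "?g x0 \<le> 0"
      thus ?thesis using x by (simp add: mult_nonpos_nonpos)
    next
      assume "x0 = 1/lmin" "?g x0 \<ge> 0"
      thus ?thesis using x by simp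
    qed
    ultimately have "?f x0 \<le> ?f x" by simp
    thus ?thesis using W0 False by (simp add: W_eq)
  qed
  have psd: "\<forall>y. 0 \<le> y \<bullet> y - x0 * (y \<bullet> (A *v y))"
  proof
    fix y :: "real^'n"
    have yy: "y \<bullet> y \<ge> 0" by simp
    show "0 \<le> y \<bullet> y - x0 * (y \<bullet> (A *v y))"
    proof (cases "x0 \<ge> 0")
      case True
      have "x0 * (y \<bullet> (A *v y)) \<le> x0 * (lmax * (y \<bullet> y))" using rmax[of y] True by (rule mult_left_mono)
      moreover have "x0 * lmax \<le> 1" using x0(2) lmax0 by (simp add: field_simps)
      hence "(x0 * lmax) * (y \<bullet> y) \<le> 1 * (y \<bullet> y)" using yy by (rule mult_right_mono)
      ultimately show ?thesis by (simp add: mult.assoc)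
    next
      case False
      have "x0 * (y \<bullet> (A *v y)) \<le> x0 * (lmin * (y \<bullet> y))" using False rmin[of y]
        by (intro mult_left_mono_neg) auto
      moreover have "x0 * lmin \<le> 1" using x0(1) lmin0 by (simp add: field_simps)
      hence "(x0 * lmin) * (y \<bullet> y) \<le> 1 * (y \<bullet> y)" using yy by (rule mult_right_mono)
      ultimately show ?thesis by (simp add: mult.assoc)
    qed
  qed
  have cs': "?g x0 = 0 \<or> (x0 \<noteq> 0 \<and> 1/x0 \<in> eigvals A \<and> 1/x0 \<notin> LL A \<and> - x0 * ?g x0 \<ge> 0)"
    using cs
  proof (elim disjE conjE)
    assume "?g x0 = 0" thus ?thesis by simp
  next
    assume a: "x0 = 1/lmax" "lmax \<notin> LL A" "?g x0 \<le> 0"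
    have "x0 > 0" using a(1) lmax0 by simp
    hence "0 \<le> x0 * (- ?g x0)" using a(3) by (intro mult_nonneg_nonneg) auto
    hence "- x0 * ?g x0 \<ge> 0" by simp
    thus ?thesis using a lmaxE lmax0 by simp
  next
    assume a: "x0 = 1/lmin" "lmin \<notin> LL A" "?g x0 \<ge> 0"
    have "x0 < 0" using a(1) lmin0 by simp
    hence "0 \<le> (- x0) * ?g x0" using a(3) by (intro mult_nonneg_nonneg) auto
    hence "- x0 * ?g x0 \<ge> 0" by simp
    thus ?thesis using a lminE lmin0 by simp
  qed
  obtain v where v: "ones \<bullet> v = (norm v)^2" "v \<bullet> (A *v v) = 0" "(norm v)^2 = ?f x0"
    using lower[OF sym np0 cs'] by blast
  have "(SUP v \<in> {v \<in> S_set. v \<bullet> (A *v v) = 0}. ereal ((norm v)\<^sup>2)) = ereal (?f x0)"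
  proof (rule antisym)
    show "(SUP v \<in> {v \<in> S_set. v \<bullet> (A *v v) = 0}. ereal ((norm v)\<^sup>2)) \<le> ereal (?f x0)"
    proof (rule SUP_least)
      fix u assume "u \<in> {v \<in> S_set. v \<bullet> (A *v v) = 0}"
      hence "ones \<bullet> u = (norm u)^2" "u \<bullet> (A *v u) = 0" unfolding S_set_def by auto
      thus "ereal ((norm u)\<^sup>2) \<le> ereal (?f x0)" using upper[OF sym np0 psd] by simp
    qed
    have "v \<in> {v \<in> S_set. v \<bullet> (A *v v) = 0}" unfolding S_set_def using v by simp
    hence "ereal ((norm v)\<^sup>2) \<le> (SUP v \<in> {v \<in> S_set. v \<bullet> (A *v v) = 0}. ereal ((norm v)\<^sup>2))"
      by (rule SUP_upper)
    thus "ereal (?f x0) \<le> (SUP v \<in> {v \<in> S_set. v \<bullet> (A *v v) = 0}. ereal ((norm v)\<^sup>2))"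
      using v(3) by simp
  qed
  thus ?thesis using x0 minimal W0 unfolding lmin_def[symmetric] lmax_def[symmetric]
    by (intro bexI[of _ x0]) auto
qed

end
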